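(* Let $(\mathcal{X},c)$ be a metric space with diameter at most $1$ and let $\mu,\nu$ be discrete probability distributions on $\mathcal{X}$ with finite supports. Then $\mathrm{RPW}_{\infty,1}(\mu,\nu)=\mathrm{LP}(\mu,\nu)$.
   Context: $c(x,y)\le1$ for all $x,y$. For $\alpha\in[0,1]$, a partial transport plan of mass $\alpha$ between $\mu,\nu$ is a nonnegative measure $\gamma$ on $\mathcal{X}\times\mathcal{X}$ of total mass $\alpha$ with first marginal $\le\mu$ and second marginal $\le\nu$ (setwise). Its $\infty$-cost $w_\infty(\gamma)$ is the maximum of $c$ over the support of $\gamma$, and $W_{\infty,\alpha}(\mu,\nu)=\inf w_\infty(\gamma)$ over such $\gamma$. $\mathrm{RPW}_{\infty,k}(\mu,\nu)=\inf\{\varepsilon\in[0,1]: W_{\infty,1-\varepsilon}(\mu,\nu)\le k\varepsilon\}$. The Lévy–Prokhorov distance is $\mathrm{LP}(\mu,\nu)=\inf\{\varepsilon>0: \mu(A)\le\nu(A^\varepsilon)+\varepsilon \text{ and } \nu(A)\le\mu(A^\varepsilon)+\varepsilon \text{ for all Borel } A\}$, where $A^\varepsilon=\{x: \inf_{a\in A}c(x,a)<\varepsilon\}$. *)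

theory Defs
  imports "HOL-Probability.Probability"
begin

text \<open>Cost c = dist on a metric space. Discrete measures are pmfs.
  A partial transport plan between finitely supported pmfs is represented as a
  nonnegative, finitely supported mass function on pairs.\<close>

definition plan_supp :: "('a \<times> 'a \<Rightarrow> real) \<Rightarrow> ('a \<times> 'a) set" where
  "plan_supp \<gamma> = {p. \<gamma> p \<noteq> 0}"

definition partial_plan :: "'a pmf \<Rightarrow> 'a pmf \<Rightarrow> real \<Rightarrow> ('a \<times> 'a \<Rightarrow> real) \<Rightarrow> bool" where
  "partial_plan \<mu> \<nu> \<alpha> \<gamma> \<longleftrightarrow>
     (\<forall>p. 0 \<le> \<gamma> p) \<and> finite (plan_supp \<gamma>) \<and>
     (\<Sum>p\<in>plan_supp \<gamma>. \<gamma> p) = \<alpha> \<and>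
     (\<forall>A. (\<Sum>p\<in>plan_supp \<gamma> \<inter> (A \<times> UNIV). \<gamma> p) \<le> measure (measure_pmf \<mu>) A) \<and>
     (\<forall>B. (\<Sum>p\<in>plan_supp \<gamma> \<inter> (UNIV \<times> B). \<gamma> p) \<le> measure (measure_pmf \<nu>) B)"

definition w_inf :: "('a::metric_space \<times> 'a \<Rightarrow> real) \<Rightarrow> real" where
  "w_inf \<gamma> = Max (insert 0 ((\<lambda>(x,y). dist x y) ` plan_supp \<gamma>))"

definition W_inf :: "real \<Rightarrow> 'a::metric_space pmf \<Rightarrow> 'a pmf \<Rightarrow> real" where
  "W_inf \<alpha> \<mu> \<nu> = Inf {w_inf \<gamma> | \<gamma>. partial_plan \<mu> \<nu> \<alpha> \<gamma>}"

definition RPW_inf :: "real \<Rightarrow> 'a::metric_space pmf \<Rightarrow> 'a pmf \<Rightarrow> real" where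
  "RPW_inf k \<mu> \<nu> = Inf {\<epsilon> \<in> {0..1}. W_inf (1 - \<epsilon>) \<mu> \<nu> \<le> k * \<epsilon>}"

definition thick :: "'a::metric_space set \<Rightarrow> real \<Rightarrow> 'a set" where
  "thick A \<epsilon> = {x. \<exists>a\<in>A. dist x a < \<epsilon>}"

definition LP :: "'a::metric_space pmf \<Rightarrow> 'a pmf \<Rightarrow> real" where
  "LP \<mu> \<nu> = Inf {\<epsilon>. \<epsilon> > 0 \<and> (\<forall>A \<in> sets borel.
      measure (measure_pmf \<mu>) A \<le> measure (measure_pmf \<nu>) (thick A \<epsilon>) + \<epsilon> \<and>
      measure (measure_pmf \<nu>) A \<le> measure (measure_pmf \<mu>) (thick A \<epsilon>) + \<epsilon>)}"

end

theory Submission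
  imports Defs
begin


definition nbr :: "('x \<Rightarrow> 'y \<Rightarrow> bool) \<Rightarrow> 'y set \<Rightarrow> 'x set \<Rightarrow> 'y set" where
  "nbr R Y A = {y\<in>Y. \<exists>x\<in>A. R x y}"

definition hallc :: "('x \<Rightarrow> 'y \<Rightarrow> bool) \<Rightarrow> 'y set \<Rightarrow> ('x \<Rightarrow> real) \<Rightarrow> ('y \<Rightarrow> real) \<Rightarrow> 'x set \<Rightarrow> bool" where
  "hallc R Y a b X \<longleftrightarrow> (\<forall>A\<subseteq>X. sum a A \<le> sum b (nbr R Y A))"

definition hsol :: "('x \<Rightarrow> 'y \<Rightarrow> bool) \<Rightarrow> 'y set \<Rightarrow> ('x \<Rightarrow> real) \<Rightarrow> ('y \<Rightarrow> real) \<Rightarrow> 'x set \<Rightarrow> ('x \<Rightarrow> 'y \<Rightarrow> real) \<Rightarrow> bool" where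
  "hsol R Y a b X f \<longleftrightarrow> (\<forall>x y. 0 \<le> f x y) \<and> (\<forall>x y. f x y \<noteq> 0 \<longrightarrow> x \<in> X \<and> y \<in> Y \<and> R x y) \<and>
     (\<forall>x\<in>X. sum (f x) Y = a x) \<and> (\<forall>y\<in>Y. (\<Sum>x\<in>X. f x y) \<le> b y)"

lemma hsolI:
  assumes "\<And>x y. 0 \<le> f x y" "\<And>x y. f x y \<noteq> 0 \<Longrightarrow> x \<in> X \<and> y \<in> Y \<and> R x y"
    "\<And>x. x \<in> X \<Longrightarrow> sum (f x) Y = a x" "\<And>y. y \<in> Y \<Longrightarrow> (\<Sum>x\<in>X. f x y) \<le> b y"
  shows "hsol R Y a b X f"
  using assms unfolding hsol_def by blast

lemma sum_upd: "finite S \<Longrightarrow> sum ((g::'a \<Rightarrow> real)(z := v)) S = sum g S + (if z \<in> S then v - g z else 0)"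
proof (cases "z \<in> S")
  case True
  assume "finite S"
  then have "sum (g(z := v)) S = v + sum (g(z := v)) (S - {z})" using True by (simp add: sum.remove)
  also have "sum (g(z := v)) (S - {z}) = sum g (S - {z})" by (rule sum.cong) auto
  also have "sum g S = g z + sum g (S - {z})" using True \<open>finite S\<close> by (simp add: sum.remove)
  moreover have "(if z \<in> S then v - g z else 0) = v - g z" using True by simp
  ultimately show ?thesis by linarith
next
  case False
  have "sum (g(z := v)) S = sum g S" using False by (intro sum.cong) auto
  then show ?thesis using False by simp
qed

lemma nbr_Un: "nbr R Y (A \<union> B) = nbr R Y A \<union> nbr R Y B"
  unfolding nbr_def by auto

lemma nbr_mono: "A \<subseteq> B \<Longrightarrow> nbr R Y A \<subseteq> nbr R Y B"
  unfolding nbr_def by auto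

lemma nbr_sub: "nbr R Y A \<subseteq> Y"
  unfolding nbr_def by auto

lemma split_tight:
  assumes IH: "\<And>X' a b. card X' < card X \<Longrightarrow> finite X' \<Longrightarrow> (\<forall>x. 0 \<le> a x) \<Longrightarrow> (\<forall>y. 0 \<le> b y)
      \<Longrightarrow> hallc R Y a b X' \<Longrightarrow> \<exists>f. hsol R Y a b X' f"
    and fX: "finite X" and fY: "finite Y" and a0: "\<forall>x. 0 \<le> a x" and b0: "\<forall>y. 0 \<le> b y"
    and H: "hallc R Y a b X" and AX: "A \<subseteq> X" and Ane: "A \<noteq> {}" and AnX: "A \<noteq> X"
    and tight: "sum a A = sum b (nbr R Y A)"
  shows "\<exists>f. hsol R Y a b X f"
proof -
  have fA: "finite A" by (rule finite_subset[OF AX fX])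
  have cA: "card A < card X" using AX AnX fX by (simp add: psubset_card_mono)
  have "X - A \<subset> X" using AX Ane by blast
  then have cXA: "card (X - A) < card X" by (rule psubset_card_mono[OF fX])
  have HA: "hallc R Y a b A" using H AX unfolding hallc_def by auto
  obtain f1 where f1: "hsol R Y a b A f1" using IH[OF cA fA a0 b0 HA] by blast
  define b2 where "b2 = (\<lambda>y. if y \<in> nbr R Y A then 0 else b y)"
  have b20: "\<forall>y. 0 \<le> b2 y" using b0 unfolding b2_def by auto
  have H2: "hallc R Y a b2 (X - A)"
    unfolding hallc_def
  proof (intro allI impI)
    fix C assume C: "C \<subseteq> X - A"
    have fC: "finite C" using C fX by (meson finite_Diff finite_subset)
    have fN: "finite (nbr R Y C)" "finite (nbr R Y A)" by (rule finite_subset[OF nbr_sub fY])+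
    have "sum a (C \<union> A) = sum a C + sum a A"
      using C fC fA by (subst sum.union_disjoint) auto
    moreover have "sum a (C \<union> A) \<le> sum b (nbr R Y (C \<union> A))"
    proof -
      have "C \<union> A \<subseteq> X" using C AX by blast
      then show ?thesis using H unfolding hallc_def by blast
    qed
    moreover have "nbr R Y (C \<union> A) = (nbr R Y C - nbr R Y A) \<union> nbr R Y A"
      by (auto simp: nbr_Un)
    moreover have "sum b ((nbr R Y C - nbr R Y A) \<union> nbr R Y A) = sum b (nbr R Y C - nbr R Y A) + sum b (nbr R Y A)"
      using fN by (subst sum.union_disjoint) auto
    moreover have "sum b2 (nbr R Y C) = sum b (nbr R Y C - nbr R Y A)"
    proof -
      have "sum b2 (nbr R Y C) = sum b2 (nbr R Y C - nbr R Y A) + sum b2 (nbr R Y C \<inter> nbr R Y A)"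
        using sum.Int_Diff[OF fN(1), of b2 "nbr R Y A"] by linarith
      also have "sum b2 (nbr R Y C \<inter> nbr R Y A) = 0" unfolding b2_def by (rule sum.neutral) auto
      also have "sum b2 (nbr R Y C - nbr R Y A) = sum b (nbr R Y C - nbr R Y A)"
        unfolding b2_def by (rule sum.cong) auto
      finally show ?thesis by simp
    qed
    ultimately show "sum a C \<le> sum b2 (nbr R Y C)" using tight by (smt (verit))
  qed
  have fXA: "finite (X - A)" using fX by blast
  obtain f2 where f2: "hsol R Y a b2 (X - A) f2" using IH[OF cXA fXA a0 b20 H2] by blast
  define f where "f = (\<lambda>x y. if x \<in> A then f1 x y else f2 x y)"
  have "hsol R Y a b X f"
  proof (rule hsolI)
    fix x y show "0 \<le> f x y" using f1 f2 unfolding f_def hsol_def by auto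
  next
    fix x y assume "f x y \<noteq> 0"
    then show "x \<in> X \<and> y \<in> Y \<and> R x y" using f1 f2 AX unfolding f_def hsol_def
      by (auto split: if_splits)
  next
    fix x assume "x \<in> X"
    then show "sum (f x) Y = a x" using f1 f2 unfolding f_def hsol_def by (cases "x \<in> A") auto
  next
    fix y assume yY: "y \<in> Y"
    have "(\<Sum>x\<in>X. f x y) = (\<Sum>x\<in>X - A. f x y) + (\<Sum>x\<in>A. f x y)"
      using AX fX by (simp add: sum.subset_diff)
    also have "(\<Sum>x\<in>X - A. f x y) = (\<Sum>x\<in>X - A. f2 x y)" unfolding f_def by (rule sum.cong) auto
    also have "(\<Sum>x\<in>A. f x y) = (\<Sum>x\<in>A. f1 x y)" unfolding f_def by (rule sum.cong) auto
    finally have eq: "(\<Sum>x\<in>X. f x y) = (\<Sum>x\<in>X - A. f2 x y) + (\<Sum>x\<in>A. f1 x y)" .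
    show "(\<Sum>x\<in>X. f x y) \<le> b y"
    proof (cases "y \<in> nbr R Y A")
      case True
      have "(\<Sum>x\<in>X - A. f2 x y) \<le> 0" using f2 yY True unfolding hsol_def b2_def by force
      moreover have "(\<Sum>x\<in>A. f1 x y) \<le> b y" using f1 yY unfolding hsol_def by auto
      ultimately show ?thesis using eq by linarith
    next
      case False
      have "(\<Sum>x\<in>A. f1 x y) = 0"
      proof (rule sum.neutral, rule ballI)
        fix x assume "x \<in> A"
        show "f1 x y = 0"
        proof (rule ccontr)
          assume "f1 x y \<noteq> 0"
          then have "R x y" using f1 unfolding hsol_def by auto
          then show False using False yY \<open>x \<in> A\<close> unfolding nbr_def by auto
        qed
      qed
      moreover have "(\<Sum>x\<in>X - A. f2 x y) \<le> b y" using f2 yY False unfolding hsol_def b2_def by force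
      ultimately show ?thesis using eq by linarith
    qed
  qed
  then show ?thesis by blast
qed

lemma hall_main:
  assumes "finite X" "finite Y" "\<forall>x. 0 \<le> a x" "\<forall>y. 0 \<le> b y" "hallc R Y a b X"
  shows "\<exists>f. hsol R Y a b X f"
  using assms
proof (induction "card X" arbitrary: X a b rule: less_induct)
  case (less X a b)
  note fX = less.prems(1) and fY = less.prems(2)
  show ?case
  proof (cases "X = {}")
    case True
    have "hsol R Y a b X (\<lambda>_ _. 0)" unfolding hsol_def using True less.prems by auto
    then show ?thesis by blast
  next
    case False
    then obtain x0 where x0X: "x0 \<in> X" by blast
    have IHo: "\<And>X' a b. card X' < card X \<Longrightarrow> finite X' \<Longrightarrow> (\<forall>x. 0 \<le> a x) \<Longrightarrow> (\<forall>y. 0 \<le> b y)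
      \<Longrightarrow> hallc R Y a b X' \<Longrightarrow> \<exists>f. hsol R Y a b X' f"
    proof -
      fix X' a b assume A: "card X' < card X" "finite X'" "\<forall>x. 0 \<le> a x" "\<forall>y. 0 \<le> b y" "hallc R Y a b X'"
      show "\<exists>f. hsol R Y a b X' f" by (rule less.hyps[OF A(1) A(2) fY A(3) A(4) A(5)])
    qed
    have zero_case: "\<exists>f. hsol R Y a b X f"
      if a0: "\<forall>x. 0 \<le> a x" and b0: "\<forall>y. 0 \<le> b y" and H: "hallc R Y a b X" and ax0: "a x0 = 0" for a b
    proof -
      have c: "card (X - {x0}) < card X" by (rule card_Diff1_less[OF fX x0X])
      have H': "hallc R Y a b (X - {x0})" using H unfolding hallc_def by auto
      obtain f where f: "hsol R Y a b (X - {x0}) f" using IHo[OF c finite_Diff[OF fX] a0 b0 H'] by blast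
      have fx0: "f x0 y = 0" for y using f unfolding hsol_def by auto
      have "hsol R Y a b X f"
      proof (rule hsolI)
        fix x y show "0 \<le> f x y" using f unfolding hsol_def by auto
      next
        fix x y assume "f x y \<noteq> 0" then show "x \<in> X \<and> y \<in> Y \<and> R x y" using f unfolding hsol_def by auto
      next
        fix x assume "x \<in> X"
        then show "sum (f x) Y = a x" using f fx0 ax0 unfolding hsol_def
          by (cases "x = x0") auto
      next
        fix y assume "y \<in> Y"
        have "(\<Sum>x\<in>X. f x y) = f x0 y + (\<Sum>x\<in>X - {x0}. f x y)" using x0X fX by (simp add: sum.remove)
        then show "(\<Sum>x\<in>X. f x y) \<le> b y" using f fx0 \<open>y \<in> Y\<close> unfolding hsol_def by auto
      qed
      then show ?thesis by blast
    qed
    have inner: "\<And>a b. card {y\<in>Y. R x0 y \<and> 0 < b y} = n \<Longrightarrow> \<forall>x. 0 \<le> a x \<Longrightarrow> \<forall>y. 0 \<le> b y \<Longrightarrow> hallc R Y a b X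
       \<Longrightarrow> \<exists>f. hsol R Y a b X f" for n
    proof (induction n rule: less_induct)
      case (less n a b)
      note a0 = less.prems(2) and b0 = less.prems(3) and H = less.prems(4)
      show ?case
      proof (cases "a x0 = 0")
        case True
        then show ?thesis by (rule zero_case[OF a0 b0 H])
      next
        case False
        then have ax0: "0 < a x0" using a0[rule_format, of x0] by linarith
        have "a x0 \<le> sum b (nbr R Y {x0})" using H x0X unfolding hallc_def by auto
        have "\<exists>y\<in>nbr R Y {x0}. 0 < b y"
        proof (rule ccontr)
          assume "\<not> (\<exists>y\<in>nbr R Y {x0}. 0 < b y)"
          then have "sum b (nbr R Y {x0}) \<le> 0" by (intro sum_nonpos) (auto simp: not_less)
          then show False using ax0 \<open>a x0 \<le> sum b (nbr R Y {x0})\<close> by linarith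
        qed
        then obtain y0 where y0Y: "y0 \<in> Y" and Ry0: "R x0 y0" and by0: "0 < b y0"
          unfolding nbr_def by auto
        define I where "I = {A. A \<subseteq> X - {x0} \<and> y0 \<in> nbr R Y A}"
        define S where "S = (\<lambda>A. sum b (nbr R Y A) - sum a A) ` I"
        have fS: "finite S" unfolding S_def I_def using fX by auto
        define t where "t = Min (insert (a x0) (insert (b y0) S))"
        have fT: "finite (insert (a x0) (insert (b y0) S))" using fS by auto
        have ta: "t \<le> a x0" unfolding t_def by (rule Min_le[OF fT]) simp
        have tb: "t \<le> b y0" unfolding t_def by (rule Min_le[OF fT]) simp
        have tS: "\<And>A. A \<in> I \<Longrightarrow> t \<le> sum b (nbr R Y A) - sum a A"
          unfolding t_def by (rule Min_le[OF fT]) (auto simp: S_def)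
        have S0: "\<forall>s\<in>S. 0 \<le> s" unfolding S_def I_def using H unfolding hallc_def by auto
        have t0: "0 \<le> t" unfolding t_def using fT S0 ax0 by0 by (auto simp: Min_ge_iff)
        have tin: "t \<in> insert (a x0) (insert (b y0) S)" unfolding t_def using fT by (rule Min_in) auto
        define a' where "a' = a(x0 := a x0 - t)"
        define b' where "b' = b(y0 := b y0 - t)"
        have a'0: "\<forall>x. 0 \<le> a' x" unfolding a'_def using a0 ta by auto
        have b'0: "\<forall>y. 0 \<le> b' y" unfolding b'_def using b0 tb by auto
        have suma': "sum a' A = sum a A - (if x0 \<in> A then t else 0)" if "finite A" for A
          unfolding a'_def using sum_upd[OF that, of a x0] by simp
        have sumb': "sum b' B = sum b B - (if y0 \<in> B then t else 0)" if "finite B" for B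
          unfolding b'_def using sum_upd[OF that, of b y0] by simp
        have fN: "finite (nbr R Y A)" for A by (rule finite_subset[OF nbr_sub fY])
        have H': "hallc R Y a' b' X"
          unfolding hallc_def
        proof (intro allI impI)
          fix A assume AX: "A \<subseteq> X"
          have fA: "finite A" using AX fX finite_subset by blast
          have HA: "sum a A \<le> sum b (nbr R Y A)" using H AX unfolding hallc_def by auto
          show "sum a' A \<le> sum b' (nbr R Y A)"
          proof (cases "x0 \<in> A")
            case True
            then have "y0 \<in> nbr R Y A" using y0Y Ry0 unfolding nbr_def by auto
            then show ?thesis using True HA suma'[OF fA] sumb'[OF fN] by simp
          next
            case False
            show ?thesis
            proof (cases "y0 \<in> nbr R Y A")
              case True
              then have "A \<in> I" unfolding I_def using AX False by auto
              then show ?thesis using tS[of A] True False suma'[OF fA] sumb'[OF fN] by simp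
            next
              case False2: False
              then show ?thesis using False HA suma'[OF fA] sumb'[OF fN] by simp
            qed
          qed
        qed
        have "\<exists>f. hsol R Y a' b' X f"
        proof -
          consider "t = a x0" | "t = b y0" | "t \<in> S" using tin by auto
          then show ?thesis
          proof cases
            case 1
            then have "a' x0 = 0" unfolding a'_def by simp
            then show ?thesis by (rule zero_case[OF a'0 b'0 H'])
          next
            case 2
            have e: "{y\<in>Y. R x0 y \<and> 0 < b' y} = {y\<in>Y. R x0 y \<and> 0 < b y} - {y0}"
              unfolding b'_def using 2 by auto
            have m: "y0 \<in> {y\<in>Y. R x0 y \<and> 0 < b y}" using y0Y Ry0 by0 by auto
            have fin: "finite {y\<in>Y. R x0 y \<and> 0 < b y}" using fY by auto
            have "card ({y\<in>Y. R x0 y \<and> 0 < b y} - {y0}) < card {y\<in>Y. R x0 y \<and> 0 < b y}"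
              by (rule card_Diff1_less[OF fin m])
            then have "card {y\<in>Y. R x0 y \<and> 0 < b' y} < n"
              unfolding e less.prems(1) .
            then show ?thesis by (rule less.IH[OF _ refl a'0 b'0 H'])
          next
            case 3
            then obtain A where AI: "A \<in> I" and tA: "t = sum b (nbr R Y A) - sum a A"
              unfolding S_def by auto
            have AX: "A \<subseteq> X" and x0A: "x0 \<notin> A" and y0A: "y0 \<in> nbr R Y A" using AI unfolding I_def by auto
            have fA: "finite A" using AX fX finite_subset by blast
            have Ane: "A \<noteq> {}" using y0A unfolding nbr_def by auto
            have AnX: "A \<noteq> X" using x0A x0X by auto
            have tight: "sum a' A = sum b' (nbr R Y A)"
              using suma'[OF fA] sumb'[OF fN] x0A y0A tA by simp
            show ?thesis by (rule split_tight[OF IHo fX fY a'0 b'0 H' AX Ane AnX tight])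
          qed
        qed
        then obtain f' where f': "hsol R Y a' b' X f'" by blast
        define f where "f = (\<lambda>x y. f' x y + (if x = x0 \<and> y = y0 then t else 0))"
        have "hsol R Y a b X f"
        proof (rule hsolI)
          fix x y show "0 \<le> f x y" using f' t0 unfolding f_def hsol_def by (auto intro: add_nonneg_nonneg)
        next
          fix x y assume "f x y \<noteq> 0"
          then show "x \<in> X \<and> y \<in> Y \<and> R x y" using f' x0X y0Y Ry0 unfolding f_def hsol_def
            by (auto split: if_splits)
        next
          fix x assume xX: "x \<in> X"
          have "sum (f x) Y = sum (f' x) Y + (\<Sum>y\<in>Y. if x = x0 \<and> y = y0 then t else 0)"
            unfolding f_def by (simp add: sum.distrib)
          also have "(\<Sum>y\<in>Y. if x = x0 \<and> y = y0 then t else 0) = (if x = x0 then t else 0)"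
            using y0Y fY by (cases "x = x0") auto
          finally show "sum (f x) Y = a x" using f' xX unfolding hsol_def a'_def by auto
        next
          fix y assume yY: "y \<in> Y"
          have "(\<Sum>x\<in>X. f x y) = (\<Sum>x\<in>X. f' x y) + (\<Sum>x\<in>X. if x = x0 \<and> y = y0 then t else 0)"
            unfolding f_def by (simp add: sum.distrib)
          also have "(\<Sum>x\<in>X. if x = x0 \<and> y = y0 then t else 0) = (if y = y0 then t else 0)"
            using x0X fX by (cases "y = y0") auto
          finally show "(\<Sum>x\<in>X. f x y) \<le> b y" using f' yY unfolding hsol_def b'_def
            by (cases "y = y0") auto
        qed
        then show ?thesis by blast
      qed
    qed
    show ?thesis by (rule inner[OF refl less.prems(3) less.prems(4) less.prems(5)])
  qed
qed



lemma plan_supp_fin_w_nonneg: "finite (plan_supp \<gamma>) \<Longrightarrow> 0 \<le> w_inf \<gamma>"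
  unfolding w_inf_def by (rule Max_ge) auto

lemma w_inf_ge: "finite (plan_supp \<gamma>) \<Longrightarrow> (x, y) \<in> plan_supp \<gamma> \<Longrightarrow> dist x y \<le> w_inf \<gamma>"
  unfolding w_inf_def by (rule Max_ge) force+

lemma w_inf_le: "finite (plan_supp \<gamma>) \<Longrightarrow> 0 \<le> c \<Longrightarrow> (\<And>x y. (x, y) \<in> plan_supp \<gamma> \<Longrightarrow> dist x y \<le> c) \<Longrightarrow> w_inf \<gamma> \<le> c"
  unfolding w_inf_def by (subst Max_le_iff) auto

lemma zero_plan: "partial_plan \<mu> \<nu> 0 (\<lambda>_. 0)" and w_inf_zero: "w_inf (\<lambda>_. 0) = 0"
  unfolding partial_plan_def w_inf_def plan_supp_def by (auto simp: measure_nonneg)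

lemma W_le:
  assumes "partial_plan \<mu> \<nu> \<alpha> \<gamma>"
  shows "W_inf \<alpha> \<mu> \<nu> \<le> w_inf \<gamma>"
  unfolding W_inf_def
proof (rule cInf_lower)
  show "w_inf \<gamma> \<in> {w_inf \<gamma> |\<gamma>. partial_plan \<mu> \<nu> \<alpha> \<gamma>}" using assms by blast
  show "bdd_below {w_inf \<gamma> |\<gamma>. partial_plan \<mu> \<nu> \<alpha> \<gamma>}"
    by (rule bdd_belowI[of _ 0]) (auto simp: partial_plan_def intro: plan_supp_fin_w_nonneg)
qed

lemma scale_plan:
  assumes g0: "\<forall>p. 0 \<le> \<gamma> p" and fin: "finite (plan_supp \<gamma>)"
    and m1: "\<forall>A. (\<Sum>p\<in>plan_supp \<gamma> \<inter> (A \<times> UNIV). \<gamma> p) \<le> measure (measure_pmf \<mu>) A"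
    and m2: "\<forall>B. (\<Sum>p\<in>plan_supp \<gamma> \<inter> (UNIV \<times> B). \<gamma> p) \<le> measure (measure_pmf \<nu>) B"
    and c0: "0 \<le> c" and cm: "c \<le> (\<Sum>p\<in>plan_supp \<gamma>. \<gamma> p)"
  shows "\<exists>\<gamma>'. partial_plan \<mu> \<nu> c \<gamma>' \<and> w_inf \<gamma>' \<le> w_inf \<gamma>"
proof (cases "c = 0")
  case True
  then show ?thesis using zero_plan w_inf_zero plan_supp_fin_w_nonneg[OF fin] by metis
next
  case False
  define m where "m = (\<Sum>p\<in>plan_supp \<gamma>. \<gamma> p)"
  have mpos: "0 < m" using False c0 cm unfolding m_def by linarith
  define \<gamma>' where "\<gamma>' = (\<lambda>p. (c / m) * \<gamma> p)"
  have cm0: "0 < c / m" using False c0 mpos by simp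
  have cm1: "c / m \<le> 1" using cm mpos unfolding m_def by simp
  have supp: "plan_supp \<gamma>' = plan_supp \<gamma>" unfolding plan_supp_def \<gamma>'_def using cm0 by auto
  have sums: "(\<Sum>p\<in>S. \<gamma>' p) = (c / m) * (\<Sum>p\<in>S. \<gamma> p)" for S
    unfolding \<gamma>'_def by (simp add: sum_distrib_left)
  have le: "(c / m) * s \<le> s" if "0 \<le> s" for s
  proof -
    have "0 \<le> c / m" using cm0 by simp
    from mult_left_le_one_le[OF that this cm1] show ?thesis .
  qed
  have "partial_plan \<mu> \<nu> c \<gamma>'"
    unfolding partial_plan_def
  proof (intro conjI allI)
    show "0 \<le> \<gamma>' p" for p
    proof -
      have "0 \<le> \<gamma> p" using g0 by blast
      then show ?thesis unfolding \<gamma>'_def by (rule mult_nonneg_nonneg[OF less_imp_le[OF cm0]])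
    qed
    show "finite (plan_supp \<gamma>')" using supp fin by simp
    show "(\<Sum>p\<in>plan_supp \<gamma>'. \<gamma>' p) = c" unfolding supp sums using mpos unfolding m_def by simp
    fix A
    have "0 \<le> (\<Sum>p\<in>plan_supp \<gamma> \<inter> (A \<times> UNIV). \<gamma> p)" by (rule sum_nonneg) (use g0 in blast)
    then show "(\<Sum>p\<in>plan_supp \<gamma>' \<inter> (A \<times> UNIV). \<gamma>' p) \<le> measure (measure_pmf \<mu>) A"
      unfolding supp sums using le m1 by (meson order_trans)
  next
    fix B
    have "0 \<le> (\<Sum>p\<in>plan_supp \<gamma> \<inter> (UNIV \<times> B). \<gamma> p)" by (rule sum_nonneg) (use g0 in blast)
    then show "(\<Sum>p\<in>plan_supp \<gamma>' \<inter> (UNIV \<times> B). \<gamma>' p) \<le> measure (measure_pmf \<nu>) B"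
      unfolding supp sums using le m2 by (meson order_trans)
  qed
  moreover have "w_inf \<gamma>' = w_inf \<gamma>" unfolding w_inf_def supp ..
  ultimately show ?thesis by auto
qed

lemma sum_supp:
  assumes "finite T" "plan_supp \<gamma> \<inter> C \<subseteq> T" "T \<subseteq> C"
  shows "(\<Sum>p\<in>plan_supp \<gamma> \<inter> C. \<gamma> p) = (\<Sum>p\<in>T. \<gamma> p)"
  by (rule sum.mono_neutral_left) (use assms in \<open>auto simp: plan_supp_def\<close>)

lemma product_plan:
  fixes \<mu> \<nu> :: "'a::metric_space pmf"
  assumes fm: "finite (set_pmf \<mu>)" and fn: "finite (set_pmf \<nu>)" and c0: "0 \<le> c" and c1: "c \<le> 1"
  shows "\<exists>\<gamma>. partial_plan \<mu> \<nu> c \<gamma>"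
proof -
  define \<gamma> where "\<gamma> = (\<lambda>(x::'a, y::'a). pmf \<mu> x * pmf \<nu> y)"
  have supp: "plan_supp \<gamma> = set_pmf \<mu> \<times> set_pmf \<nu>"
    unfolding plan_supp_def \<gamma>_def by (auto simp: set_pmf_eq)
  have fin: "finite (plan_supp \<gamma>)" using supp fm fn by simp
  have g0: "\<forall>p. 0 \<le> \<gamma> p" unfolding \<gamma>_def by auto
  have m1: "(\<Sum>p\<in>plan_supp \<gamma> \<inter> (A \<times> UNIV). \<gamma> p) = measure (measure_pmf \<mu>) A" for A
  proof -
    have "(\<Sum>p\<in>plan_supp \<gamma> \<inter> (A \<times> UNIV). \<gamma> p) = (\<Sum>p\<in>(A \<inter> set_pmf \<mu>) \<times> set_pmf \<nu>. \<gamma> p)"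
      by (rule sum_supp) (use fm fn supp in auto)
    also have "\<dots> = (\<Sum>x\<in>A \<inter> set_pmf \<mu>. \<Sum>y\<in>set_pmf \<nu>. pmf \<mu> x * pmf \<nu> y)"
      unfolding \<gamma>_def by (subst sum.cartesian_product) simp
    also have "\<dots> = (\<Sum>x\<in>A \<inter> set_pmf \<mu>. pmf \<mu> x)"
      by (simp add: sum_distrib_left[symmetric] sum_pmf_eq_1[OF fn])
    also have "\<dots> = measure (measure_pmf \<mu>) A"
      using fm by (simp add: measure_measure_pmf_finite[symmetric] measure_Int_set_pmf)
    finally show ?thesis .
  qed
  have m2: "(\<Sum>p\<in>plan_supp \<gamma> \<inter> (UNIV \<times> B). \<gamma> p) = measure (measure_pmf \<nu>) B" for B
  proof -
    have "(\<Sum>p\<in>plan_supp \<gamma> \<inter> (UNIV \<times> B). \<gamma> p) = (\<Sum>p\<in>set_pmf \<mu> \<times> (B \<inter> set_pmf \<nu>). \<gamma> p)"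
      by (rule sum_supp) (use fm fn supp in auto)
    also have "\<dots> = (\<Sum>x\<in>set_pmf \<mu>. \<Sum>y\<in>B \<inter> set_pmf \<nu>. pmf \<mu> x * pmf \<nu> y)"
      unfolding \<gamma>_def by (subst sum.cartesian_product) simp
    also have "\<dots> = (\<Sum>y\<in>B \<inter> set_pmf \<nu>. pmf \<nu> y)"
      by (subst sum.swap) (simp add: sum_distrib_right[symmetric] sum_pmf_eq_1[OF fm])
    also have "\<dots> = measure (measure_pmf \<nu>) B"
      using fn by (simp add: measure_measure_pmf_finite[symmetric] measure_Int_set_pmf)
    finally show ?thesis .
  qed
  have tot: "(\<Sum>p\<in>plan_supp \<gamma>. \<gamma> p) = 1"
    using m1[of UNIV] by simp
  show ?thesis using scale_plan[OF g0 fin _ _ c0] m1 m2 tot c1 by fastforce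
qed

lemma hard_plan:
  fixes \<mu> \<nu> :: "'a::metric_space pmf"
  assumes fm: "finite (set_pmf \<mu>)" and fn: "finite (set_pmf \<nu>)" and e0: "0 < e" and e1: "e \<le> 1"
    and LPc: "\<forall>A\<in>sets borel. measure (measure_pmf \<mu>) A \<le> measure (measure_pmf \<nu>) (thick A e) + e"
  shows "\<exists>\<gamma>. partial_plan \<mu> \<nu> (1 - e) \<gamma> \<and> w_inf \<gamma> \<le> e"
proof -
  define X where "X = set_pmf \<mu>"
  define Y where "Y = insert None (Some ` set_pmf \<nu>)"
  define b where "b = (\<lambda>q. case q of None \<Rightarrow> e | Some y \<Rightarrow> pmf \<nu> y)"
  define R where "R = (\<lambda>(x::'a) q. case q of None \<Rightarrow> True | Some (y::'a) \<Rightarrow> dist x y < e)"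
  have fY: "finite Y" unfolding Y_def using fn by simp
  have fX: "finite X" unfolding X_def using fm .
  have a0: "\<forall>x. 0 \<le> pmf \<mu> x" by simp
  have b0: "\<forall>y. 0 \<le> b y" using e0 by (auto simp: b_def split: option.split)
  have H: "hallc R Y (pmf \<mu>) b X"
    unfolding hallc_def
  proof (intro allI impI)
    fix A assume AX: "A \<subseteq> X"
    show "sum (pmf \<mu>) A \<le> sum b (nbr R Y A)"
    proof (cases "A = {}")
      case True then show ?thesis by (simp add: nbr_def)
    next
      case False
      have fA: "finite A" by (rule finite_subset[OF AX fX])
      have N: "nbr R Y A = insert None (Some ` (set_pmf \<nu> \<inter> thick A e))"
        using False unfolding nbr_def Y_def R_def thick_def by (auto simp: image_iff) (metis dist_commute)+
      have "sum b (nbr R Y A) = e + sum (pmf \<nu>) (set_pmf \<nu> \<inter> thick A e)"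
        unfolding N using fn by (simp add: sum.reindex b_def)
      also have "sum (pmf \<nu>) (set_pmf \<nu> \<inter> thick A e) = measure (measure_pmf \<nu>) (thick A e)"
      proof -
        have "sum (pmf \<nu>) (set_pmf \<nu> \<inter> thick A e) = measure (measure_pmf \<nu>) (thick A e \<inter> set_pmf \<nu>)"
          using fn by (simp add: measure_measure_pmf_finite Int_commute)
        then show ?thesis by (simp add: measure_Int_set_pmf)
      qed
      finally have 1: "sum b (nbr R Y A) = e + measure (measure_pmf \<nu>) (thick A e)" .
      have "A \<in> sets borel" using fA by (intro borel_closed finite_imp_closed)
      then have "measure (measure_pmf \<mu>) A \<le> measure (measure_pmf \<nu>) (thick A e) + e" using LPc by blast
      moreover have "sum (pmf \<mu>) A = measure (measure_pmf \<mu>) A" using fA by (simp add: measure_measure_pmf_finite)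
      ultimately show ?thesis using 1 by linarith
    qed
  qed
  obtain f where f: "hsol R Y (pmf \<mu>) b X f" using hall_main[OF fX fY a0 b0 H] by blast
  have fpos: "\<And>x q. 0 \<le> f x q" and fsupp: "\<And>x q. f x q \<noteq> 0 \<Longrightarrow> x \<in> X \<and> q \<in> Y \<and> R x q"
    and frow: "\<And>x. x \<in> X \<Longrightarrow> sum (f x) Y = pmf \<mu> x" and fcol: "\<And>q. q \<in> Y \<Longrightarrow> (\<Sum>x\<in>X. f x q) \<le> b q"
    using f unfolding hsol_def by auto
  define \<gamma> where "\<gamma> = (\<lambda>(x, y). f x (Some y))"
  have supp: "plan_supp \<gamma> \<subseteq> set_pmf \<mu> \<times> set_pmf \<nu>"
  proof
    fix p assume "p \<in> plan_supp \<gamma>"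
    obtain x y where p: "p = (x, y)" by fastforce
    with \<open>p \<in> plan_supp \<gamma>\<close> have "f x (Some y) \<noteq> 0" unfolding plan_supp_def \<gamma>_def by auto
    then have "x \<in> X" "Some y \<in> Y" using fsupp by blast+
    then show "p \<in> set_pmf \<mu> \<times> set_pmf \<nu>" unfolding p X_def Y_def by auto
  qed
  have fin: "finite (plan_supp \<gamma>)" by (rule finite_subset[OF supp]) (use fm fn in simp)
  have g0: "\<forall>p. 0 \<le> \<gamma> p" unfolding \<gamma>_def using fpos by auto
  have rowY: "sum (f x) Y = f x None + (\<Sum>y\<in>set_pmf \<nu>. f x (Some y))" for x
    unfolding Y_def using fn by (simp add: sum.reindex)
  have m1: "(\<Sum>p\<in>plan_supp \<gamma> \<inter> (A \<times> UNIV). \<gamma> p) \<le> measure (measure_pmf \<mu>) A" for A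
  proof -
    have "(\<Sum>p\<in>plan_supp \<gamma> \<inter> (A \<times> UNIV). \<gamma> p) = (\<Sum>p\<in>(A \<inter> set_pmf \<mu>) \<times> set_pmf \<nu>. \<gamma> p)"
      by (rule sum_supp) (use fm fn supp in auto)
    also have "\<dots> = (\<Sum>x\<in>A \<inter> set_pmf \<mu>. \<Sum>y\<in>set_pmf \<nu>. f x (Some y))"
      unfolding \<gamma>_def by (subst sum.cartesian_product) simp
    also have "\<dots> \<le> (\<Sum>x\<in>A \<inter> set_pmf \<mu>. pmf \<mu> x)"
    proof (rule sum_mono)
      fix x assume "x \<in> A \<inter> set_pmf \<mu>"
      then have "sum (f x) Y = pmf \<mu> x" using frow X_def by auto
      then show "(\<Sum>y\<in>set_pmf \<nu>. f x (Some y)) \<le> pmf \<mu> x" using rowY[of x] fpos[of x None] by linarith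
    qed
    also have "\<dots> = measure (measure_pmf \<mu>) A"
      using fm by (simp add: measure_measure_pmf_finite[symmetric] measure_Int_set_pmf)
    finally show ?thesis .
  qed
  have m2: "(\<Sum>p\<in>plan_supp \<gamma> \<inter> (UNIV \<times> B). \<gamma> p) \<le> measure (measure_pmf \<nu>) B" for B
  proof -
    have "(\<Sum>p\<in>plan_supp \<gamma> \<inter> (UNIV \<times> B). \<gamma> p) = (\<Sum>p\<in>set_pmf \<mu> \<times> (B \<inter> set_pmf \<nu>). \<gamma> p)"
      by (rule sum_supp) (use fm fn supp in auto)
    also have "\<dots> = (\<Sum>x\<in>set_pmf \<mu>. \<Sum>y\<in>B \<inter> set_pmf \<nu>. f x (Some y))"
      unfolding \<gamma>_def by (subst sum.cartesian_product) simp
    also have "\<dots> = (\<Sum>y\<in>B \<inter> set_pmf \<nu>. \<Sum>x\<in>set_pmf \<mu>. f x (Some y))"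
      by (rule sum.swap)
    also have "\<dots> \<le> (\<Sum>y\<in>B \<inter> set_pmf \<nu>. pmf \<nu> y)"
    proof (rule sum_mono)
      fix y assume "y \<in> B \<inter> set_pmf \<nu>"
      then have "Some y \<in> Y" unfolding Y_def by auto
      then show "(\<Sum>x\<in>set_pmf \<mu>. f x (Some y)) \<le> pmf \<nu> y" using fcol[of "Some y"] unfolding X_def b_def by simp
    qed
    also have "\<dots> = measure (measure_pmf \<nu>) B"
      using fn by (simp add: measure_measure_pmf_finite[symmetric] measure_Int_set_pmf)
    finally show ?thesis .
  qed
  have mass: "1 - e \<le> (\<Sum>p\<in>plan_supp \<gamma>. \<gamma> p)"
  proof -
    have "(\<Sum>p\<in>plan_supp \<gamma>. \<gamma> p) = (\<Sum>p\<in>plan_supp \<gamma> \<inter> UNIV. \<gamma> p)" by simp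
    also have "\<dots> = (\<Sum>p\<in>set_pmf \<mu> \<times> set_pmf \<nu>. \<gamma> p)"
      by (rule sum_supp) (use fm fn supp in auto)
    also have "\<dots> = (\<Sum>x\<in>set_pmf \<mu>. \<Sum>y\<in>set_pmf \<nu>. f x (Some y))"
      unfolding \<gamma>_def by (subst sum.cartesian_product) simp
    also have "\<dots> = (\<Sum>x\<in>set_pmf \<mu>. pmf \<mu> x - f x None)"
    proof (rule sum.cong[OF refl])
      fix x assume "x \<in> set_pmf \<mu>"
      then have "sum (f x) Y = pmf \<mu> x" using frow X_def by auto
      then show "(\<Sum>y\<in>set_pmf \<nu>. f x (Some y)) = pmf \<mu> x - f x None" using rowY[of x] by linarith
    qed
    also have "\<dots> = 1 - (\<Sum>x\<in>set_pmf \<mu>. f x None)"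
      by (simp add: sum_subtractf sum_pmf_eq_1[OF fm])
    finally have eq: "(\<Sum>p\<in>plan_supp \<gamma>. \<gamma> p) = 1 - (\<Sum>x\<in>set_pmf \<mu>. f x None)" .
    have "None \<in> Y" unfolding Y_def by simp
    then have "(\<Sum>x\<in>set_pmf \<mu>. f x None) \<le> e" using fcol[of None] unfolding X_def b_def by simp
    then show ?thesis using eq by linarith
  qed
  have wle: "w_inf \<gamma> \<le> e"
  proof (rule w_inf_le[OF fin])
    show "0 \<le> e" using e0 by simp
    fix x y assume "(x, y) \<in> plan_supp \<gamma>"
    then have "f x (Some y) \<noteq> 0" unfolding plan_supp_def \<gamma>_def by simp
    then have "R x (Some y)" using fsupp by blast
    then show "dist x y \<le> e" unfolding R_def by simp
  qed
  have c0: "0 \<le> 1 - e" using e1 by simp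
  obtain \<gamma>' where "partial_plan \<mu> \<nu> (1 - e) \<gamma>'" "w_inf \<gamma>' \<le> w_inf \<gamma>"
    using scale_plan[OF g0 fin _ _ c0 mass] m1 m2 by blast
  then show ?thesis using wle by force
qed

lemma easy1:
  fixes \<mu> \<nu> :: "'a::metric_space pmf"
  assumes P: "partial_plan \<mu> \<nu> \<alpha> \<gamma>" and w: "w_inf \<gamma> < r"
  shows "measure (measure_pmf \<mu>) A \<le> measure (measure_pmf \<nu>) (thick A r) + (1 - \<alpha>)"
proof -
  have g0: "\<And>p. 0 \<le> \<gamma> p" and fin: "finite (plan_supp \<gamma>)" and tot: "(\<Sum>p\<in>plan_supp \<gamma>. \<gamma> p) = \<alpha>"
    and m1: "\<And>A. (\<Sum>p\<in>plan_supp \<gamma> \<inter> (A \<times> UNIV). \<gamma> p) \<le> measure (measure_pmf \<mu>) A"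
    and m2: "\<And>B. (\<Sum>p\<in>plan_supp \<gamma> \<inter> (UNIV \<times> B). \<gamma> p) \<le> measure (measure_pmf \<nu>) B"
    using P unfolding partial_plan_def by auto
  define S where "S = plan_supp \<gamma>"
  have split: "(\<Sum>p\<in>S. \<gamma> p) = (\<Sum>p\<in>S \<inter> (A \<times> UNIV). \<gamma> p) + (\<Sum>p\<in>S - (A \<times> UNIV). \<gamma> p)"
    unfolding S_def by (rule sum.Int_Diff[OF fin])
  have "S - (A \<times> UNIV) = S \<inter> ((UNIV - A) \<times> UNIV)" by auto
  then have "(\<Sum>p\<in>S - (A \<times> UNIV). \<gamma> p) \<le> measure (measure_pmf \<mu>) (UNIV - A)"
    using m1[of "UNIV - A"] unfolding S_def by simp
  also have "measure (measure_pmf \<mu>) (UNIV - A) = 1 - measure (measure_pmf \<mu>) A"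
    using measure_pmf.prob_compl[of A \<mu>] by simp
  finally have c: "(\<Sum>p\<in>S - (A \<times> UNIV). \<gamma> p) \<le> 1 - measure (measure_pmf \<mu>) A" .
  have "(\<Sum>p\<in>S \<inter> (A \<times> UNIV). \<gamma> p) \<le> (\<Sum>p\<in>S \<inter> (UNIV \<times> thick A r). \<gamma> p)"
  proof (rule sum_mono2)
    show "finite (S \<inter> (UNIV \<times> thick A r))" using fin unfolding S_def by simp
    show "S \<inter> (A \<times> UNIV) \<subseteq> S \<inter> (UNIV \<times> thick A r)"
    proof
      fix p assume p: "p \<in> S \<inter> (A \<times> UNIV)"
      obtain x y where xy: "p = (x, y)" by fastforce
      have "dist x y \<le> w_inf \<gamma>" using w_inf_ge[OF fin] p xy unfolding S_def by blast
      then have "dist y x < r" using w by (simp add: dist_commute)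
      then have "y \<in> thick A r" using p xy unfolding thick_def by auto
      then show "p \<in> S \<inter> (UNIV \<times> thick A r)" using p xy by auto
    qed
    show "\<And>b. b \<in> S \<inter> (UNIV \<times> thick A r) - S \<inter> (A \<times> UNIV) \<Longrightarrow> 0 \<le> \<gamma> b" using g0 by blast
  qed
  also have "\<dots> \<le> measure (measure_pmf \<nu>) (thick A r)" using m2 unfolding S_def by blast
  finally have d: "(\<Sum>p\<in>S \<inter> (A \<times> UNIV). \<gamma> p) \<le> measure (measure_pmf \<nu>) (thick A r)" .
  show ?thesis using split c d tot unfolding S_def by linarith
qed

lemma easy2:
  fixes \<mu> \<nu> :: "'a::metric_space pmf"
  assumes P: "partial_plan \<mu> \<nu> \<alpha> \<gamma>" and w: "w_inf \<gamma> < r"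
  shows "measure (measure_pmf \<nu>) B \<le> measure (measure_pmf \<mu>) (thick B r) + (1 - \<alpha>)"
proof -
  have g0: "\<And>p. 0 \<le> \<gamma> p" and fin: "finite (plan_supp \<gamma>)" and tot: "(\<Sum>p\<in>plan_supp \<gamma>. \<gamma> p) = \<alpha>"
    and m1: "\<And>A. (\<Sum>p\<in>plan_supp \<gamma> \<inter> (A \<times> UNIV). \<gamma> p) \<le> measure (measure_pmf \<mu>) A"
    and m2: "\<And>B. (\<Sum>p\<in>plan_supp \<gamma> \<inter> (UNIV \<times> B). \<gamma> p) \<le> measure (measure_pmf \<nu>) B"
    using P unfolding partial_plan_def by auto
  define S where "S = plan_supp \<gamma>"
  have split: "(\<Sum>p\<in>S. \<gamma> p) = (\<Sum>p\<in>S \<inter> (UNIV \<times> B). \<gamma> p) + (\<Sum>p\<in>S - (UNIV \<times> B). \<gamma> p)"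
    unfolding S_def by (rule sum.Int_Diff[OF fin])
  have "S - (UNIV \<times> B) = S \<inter> (UNIV \<times> (UNIV - B))" by auto
  then have "(\<Sum>p\<in>S - (UNIV \<times> B). \<gamma> p) \<le> measure (measure_pmf \<nu>) (UNIV - B)"
    using m2[of "UNIV - B"] unfolding S_def by simp
  also have "measure (measure_pmf \<nu>) (UNIV - B) = 1 - measure (measure_pmf \<nu>) B"
    using measure_pmf.prob_compl[of B \<nu>] by simp
  finally have c: "(\<Sum>p\<in>S - (UNIV \<times> B). \<gamma> p) \<le> 1 - measure (measure_pmf \<nu>) B" .
  have "(\<Sum>p\<in>S \<inter> (UNIV \<times> B). \<gamma> p) \<le> (\<Sum>p\<in>S \<inter> (thick B r \<times> UNIV). \<gamma> p)"
  proof (rule sum_mono2)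
    show "finite (S \<inter> (thick B r \<times> UNIV))" using fin unfolding S_def by simp
    show "S \<inter> (UNIV \<times> B) \<subseteq> S \<inter> (thick B r \<times> UNIV)"
    proof
      fix p assume p: "p \<in> S \<inter> (UNIV \<times> B)"
      obtain x y where xy: "p = (x, y)" by fastforce
      have "dist x y \<le> w_inf \<gamma>" using w_inf_ge[OF fin] p xy unfolding S_def by blast
      then have "dist x y < r" using w by simp
      then have "x \<in> thick B r" using p xy unfolding thick_def by auto
      then show "p \<in> S \<inter> (thick B r \<times> UNIV)" using p xy by auto
    qed
    show "\<And>b. b \<in> S \<inter> (thick B r \<times> UNIV) - S \<inter> (UNIV \<times> B) \<Longrightarrow> 0 \<le> \<gamma> b" using g0 by blast
  qed
  also have "\<dots> \<le> measure (measure_pmf \<mu>) (thick B r)" using m1 unfolding S_def by blast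
  finally have d: "(\<Sum>p\<in>S \<inter> (UNIV \<times> B). \<gamma> p) \<le> measure (measure_pmf \<mu>) (thick B r)" .
  show ?thesis using split c d tot unfolding S_def by linarith
qed

theorem lemmaA3:
  fixes \<mu> \<nu> :: "'a::metric_space pmf"
  assumes "\<forall>x y::'a. dist x y \<le> 1"
    and "finite (set_pmf \<mu>)" and "finite (set_pmf \<nu>)"
  shows "RPW_inf 1 \<mu> \<nu> = LP \<mu> \<nu>"
proof -
  define SR where "SR = {\<epsilon> \<in> {0..1}. W_inf (1 - \<epsilon>) \<mu> \<nu> \<le> 1 * \<epsilon>}"
  define SL where "SL = {\<epsilon>. \<epsilon> > 0 \<and> (\<forall>A \<in> sets borel.
      measure (measure_pmf \<mu>) A \<le> measure (measure_pmf \<nu>) (thick A \<epsilon>) + \<epsilon> \<and>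
      measure (measure_pmf \<nu>) A \<le> measure (measure_pmf \<mu>) (thick A \<epsilon>) + \<epsilon>)}"
  have z: "w_inf (\<lambda>_::'a \<times> 'a. 0::real) = 0" by (rule w_inf_zero)
  have W0: "W_inf 0 \<mu> \<nu> \<le> 0" using W_le[OF zero_plan, of \<mu> \<nu>] z by simp
  have oneR: "1 \<in> SR" using W0 unfolding SR_def by simp
  have bddR: "bdd_below SR" unfolding SR_def by (rule bdd_belowI[of _ 0]) auto
  have twoL: "2 \<in> SL"
  proof -
    have "measure (measure_pmf p) A \<le> measure (measure_pmf q) B + 2" for p q :: "'a pmf" and A B
    proof -
      have "measure (measure_pmf p) A \<le> 1" by (rule measure_pmf.prob_le_1)
      moreover have "0 \<le> measure (measure_pmf q) B" by (rule measure_nonneg)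
      ultimately show ?thesis by linarith
    qed
    then show ?thesis unfolding SL_def by auto
  qed
  have bddL: "bdd_below SL" unfolding SL_def by (rule bdd_belowI[of _ 0]) auto
  have le1: "Inf SR \<le> Inf SL"
  proof (rule cInf_greatest)
    show "SL \<noteq> {}" using twoL by blast
    fix e assume eL: "e \<in> SL"
    show "Inf SR \<le> e"
    proof (cases "1 \<le> e")
      case True then show ?thesis using cInf_lower[OF oneR bddR] by linarith
    next
      case False
      have e0: "0 < e" using eL unfolding SL_def by auto
      have LPc: "\<forall>A\<in>sets borel. measure (measure_pmf \<mu>) A \<le> measure (measure_pmf \<nu>) (thick A e) + e"
        using eL unfolding SL_def by auto
      obtain \<gamma> where P: "partial_plan \<mu> \<nu> (1 - e) \<gamma>" and w: "w_inf \<gamma> \<le> e"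
        using hard_plan[OF assms(2,3) e0 _ LPc] False by auto
      have "W_inf (1 - e) \<mu> \<nu> \<le> e" using W_le[OF P] w by linarith
      then have "e \<in> SR" unfolding SR_def using e0 False by auto
      then show ?thesis by (rule cInf_lower[OF _ bddR])
    qed
  qed
  have le2: "Inf SL \<le> Inf SR"
  proof (rule cInf_greatest)
    show "SR \<noteq> {}" using oneR by blast
    fix e assume eR: "e \<in> SR"
    then have e0: "0 \<le> e" "e \<le> 1" and W: "W_inf (1 - e) \<mu> \<nu> \<le> e" unfolding SR_def by auto
    show "Inf SL \<le> e"
    proof (rule field_le_epsilon)
      fix d :: real assume d: "0 < d"
      have ne: "{w_inf \<gamma> | \<gamma>. partial_plan \<mu> \<nu> (1 - e) \<gamma>} \<noteq> {}"
        using product_plan[OF assms(2,3), of "1 - e"] e0 by auto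
      have "Inf {w_inf \<gamma> | \<gamma>. partial_plan \<mu> \<nu> (1 - e) \<gamma>} < e + d" using W d unfolding W_inf_def by linarith
      from cInf_lessD[OF ne this] obtain \<gamma> where P: "partial_plan \<mu> \<nu> (1 - e) \<gamma>" and w: "w_inf \<gamma> < e + d"
        by blast
      have "e + d \<in> SL"
        unfolding SL_def
      proof (intro CollectI conjI ballI)
        show "0 < e + d" using d e0 by simp
        fix A :: "'a set"
        show "measure (measure_pmf \<mu>) A \<le> measure (measure_pmf \<nu>) (thick A (e + d)) + (e + d)"
          using easy1[OF P w, of A] d by simp
        show "measure (measure_pmf \<nu>) A \<le> measure (measure_pmf \<mu>) (thick A (e + d)) + (e + d)"
          using easy2[OF P w, of A] d by simp
      qed
      then show "Inf SL \<le> e + d" by (rule cInf_lower[OF _ bddL])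
    qed
  qed
  show ?thesis unfolding RPW_inf_def LP_def SR_def[symmetric] SL_def[symmetric] using le1 le2 by linarith
qed

end
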